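(* Consider the admission control model described in the context, with discount rate $\alpha>0$, and suppose: (i) $0\le \Delta d_{i+1}\le \Delta d_i$ for $1\le i\le n-1$, and $\Delta d_1>0$; (ii) $\Delta h_{i+1}\ge \Delta h_i\ge 0$ for $1\le i\le n-1$. Define $\nu_0,\dots,\nu_{n-1}$ recursively by $$\nu_0=\frac{\Delta h_1}{\alpha+\Delta d_1},\qquad \nu_j=\nu_{j-1}+\frac{\Delta h_{j+1}-\nu_{j-1}(\alpha+\Delta d_{j+1})}{\alpha+\Delta d_{j+1}+w^{S_{j+1}}_{j-1}/\rho_{j-1}},\quad 1\le j\le n-1.$$ Then the model is PCL-indexable relative to threshold policies and the rejection measure, in the following sense: (a) $w^S_i>0$ for every $S\in\mathcal F$ and $0\le i\le n-1$, and $\nu_0\le\nu_1\le\cdots\le\nu_{n-1}$; (b) the $\nu$-charge problem is indexable relative to threshold policies with dynamic allocation indices $\nu_j$: for every $\nu\in\mathbb R$, the set of states $j\in\{0,\dots,n-1\}$ at which shutting the gate is optimal in the $\nu$-charge problem equals $\{j: \nu\le \nu_j\}$ (which belongs to $\mathcal F$ and decreases from $\{0,\dots,n-1\}$ to $\emptyset$ as $\nu$ increases from $-\infty$ to $+\infty$); (c) for every $j\in\{0,\dots,n-1\}$, $$\nu_j=\max\left\{\frac{v^{S\setminus\{j\}}_j-v^S_j}{b^S_j-b^{S\setminus\{j\}}_j}:\ j\in S\in\{S_1,\dots,S_n\}\right\}.$$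
   Context: Admission control model: a single-server queue with finite buffer, whose number in system $L(t)\in N=\{0,1,\dots,n\}$ ($n\ge1$) evolves in continuous time. In state $i$ customers arrive as a Poisson stream of rate $\lambda_i>0$ and the server completes services at rate $\mu_i>0$ ($1\le i\le n$), with $\mu_0=0$. A gatekeeper chooses at each time an action $a(t)\in\{0,1\}$: $a=1$ (shut the entry gate; arriving customers are rejected) or $a=0$ (open; arriving customers are admitted). In state $n$ the gate is always shut. Policies are stationary (possibly randomized) functions of the state. Holding costs accrue at rate $h_i$ in state $i$, and are discounted at rate $\alpha>0$. For a policy $u$ and initial state $i$: $v^u_i=E^u_i[\int_0^\infty h_{L(t)}e^{-\alpha t}dt]$ and $b^u_i=E^u_i[\int_0^\infty \lambda_{L(t)}a(t)e^{-\alpha t}dt]$ (expected discounted number of rejections). The $\nu$-charge problem is to minimize $v^u_i+\nu b^u_i$ over stationary policies. For $S\subseteq\{0,\dots,n-1\}$, the $S$-active policy shuts the gate exactly in states $S\cup\{n\}$; write $v^S_i,b^S_i$ for its measures. Marginal workloads: $w^S_i=\lambda_i\,[1-(b^S_{i+1}-b^S_i)]$ for $0\le i\le n-1$. Threshold sets: $S_k=\{k-1,\dots,n-1\}$ for $1\le k\le n$, $S_{n+1}=\emptyset$, and $\mathcal F=\{S_1,\dots,S_{n+1}\}$. Notation: $\Delta x_i=x_i-x_{i-1}$; $d_i=\mu_i-\lambda_i$ (so $d_0=-\lambda_0$); $\rho_i=\lambda_i/\mu_{i+1}$. *)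

theory Defs
  imports Complex_Main
begin

text \<open>States are 0..n. A stationary randomized policy is given by u i = probability
  of shutting the gate in state i (i < n); in state n the gate is always shut.\<close>

definition shutp :: "nat \<Rightarrow> (nat \<Rightarrow> real) \<Rightarrow> nat \<Rightarrow> real" where
  "shutp n u i = (if i < n then u i else 1)"

definition policy :: "nat \<Rightarrow> (nat \<Rightarrow> real) \<Rightarrow> bool" where
  "policy n u \<longleftrightarrow> (\<forall>i<n. 0 \<le> u i \<and> u i \<le> 1)"

text \<open>Expected total alpha-discounted reward under policy u with reward rate r,
  as a function of the initial state: the unique solution of the policy-evaluation
  (resolvent) equations of the controlled birth-death chain.\<close>

definition evalm :: "nat \<Rightarrow> real \<Rightarrow> (nat \<Rightarrow> real) \<Rightarrow> (nat \<Rightarrow> real) \<Rightarrow> (nat \<Rightarrow> real)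
     \<Rightarrow> (nat \<Rightarrow> real) \<Rightarrow> nat \<Rightarrow> real" where
  "evalm n \<alpha> lam mu r u = (THE f.
      (\<forall>i\<le>n. \<alpha> * f i = r i + lam i * (1 - shutp n u i) * (f (Suc i) - f i)
                        + mu i * (f (i - 1) - f i)) \<and> (\<forall>i>n. f i = 0))"

definition vm :: "nat \<Rightarrow> real \<Rightarrow> (nat \<Rightarrow> real) \<Rightarrow> (nat \<Rightarrow> real) \<Rightarrow> (nat \<Rightarrow> real)
     \<Rightarrow> (nat \<Rightarrow> real) \<Rightarrow> nat \<Rightarrow> real" where
  "vm n \<alpha> lam mu h u = evalm n \<alpha> lam mu h u"

definition bm :: "nat \<Rightarrow> real \<Rightarrow> (nat \<Rightarrow> real) \<Rightarrow> (nat \<Rightarrow> real)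
     \<Rightarrow> (nat \<Rightarrow> real) \<Rightarrow> nat \<Rightarrow> real" where
  "bm n \<alpha> lam mu u = evalm n \<alpha> lam mu (\<lambda>i. lam i * shutp n u i) u"

definition setpol :: "nat set \<Rightarrow> nat \<Rightarrow> real" where
  "setpol S i = (if i \<in> S then 1 else 0)"

definition thr :: "nat \<Rightarrow> nat \<Rightarrow> nat set" where
  "thr n k = {k - 1..<n}"

definition thrF :: "nat \<Rightarrow> nat set set" where
  "thrF n = thr n ` {1..n+1}"

definition wS :: "nat \<Rightarrow> real \<Rightarrow> (nat \<Rightarrow> real) \<Rightarrow> (nat \<Rightarrow> real) \<Rightarrow> nat set \<Rightarrow> nat \<Rightarrow> real" where
  "wS n \<alpha> lam mu S i = lam i * (1 - (bm n \<alpha> lam mu (setpol S) (Suc i) - bm n \<alpha> lam mu (setpol S) i))"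

definition dlt :: "(nat \<Rightarrow> real) \<Rightarrow> nat \<Rightarrow> real" where
  "dlt x i = x i - x (i - 1)"

definition dd :: "(nat \<Rightarrow> real) \<Rightarrow> (nat \<Rightarrow> real) \<Rightarrow> nat \<Rightarrow> real" where
  "dd lam mu i = mu i - lam i"

definition rho :: "(nat \<Rightarrow> real) \<Rightarrow> (nat \<Rightarrow> real) \<Rightarrow> nat \<Rightarrow> real" where
  "rho lam mu i = lam i / mu (Suc i)"

fun nuidx :: "nat \<Rightarrow> real \<Rightarrow> (nat \<Rightarrow> real) \<Rightarrow> (nat \<Rightarrow> real) \<Rightarrow> (nat \<Rightarrow> real) \<Rightarrow> nat \<Rightarrow> real" where
  "nuidx n \<alpha> lam mu h 0 = dlt h 1 / (\<alpha> + dlt (dd lam mu) 1)"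
| "nuidx n \<alpha> lam mu h (Suc j) = nuidx n \<alpha> lam mu h j
     + (dlt h (j + 2) - nuidx n \<alpha> lam mu h j * (\<alpha> + dlt (dd lam mu) (j + 2)))
       / (\<alpha> + dlt (dd lam mu) (j + 2) + wS n \<alpha> lam mu (thr n (j + 2)) j / rho lam mu j)"

definition optimal :: "nat \<Rightarrow> real \<Rightarrow> (nat \<Rightarrow> real) \<Rightarrow> (nat \<Rightarrow> real) \<Rightarrow> (nat \<Rightarrow> real)
     \<Rightarrow> real \<Rightarrow> (nat \<Rightarrow> real) \<Rightarrow> bool" where
  "optimal n \<alpha> lam mu h \<nu> u \<longleftrightarrow> policy n u \<and>
     (\<forall>u'. policy n u' \<longrightarrow> (\<forall>i\<le>n. vm n \<alpha> lam mu h u i + \<nu> * bm n \<alpha> lam mu u i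
                                   \<le> vm n \<alpha> lam mu h u' i + \<nu> * bm n \<alpha> lam mu u' i))"

definition shut_optimal :: "nat \<Rightarrow> real \<Rightarrow> (nat \<Rightarrow> real) \<Rightarrow> (nat \<Rightarrow> real) \<Rightarrow> (nat \<Rightarrow> real)
     \<Rightarrow> real \<Rightarrow> nat \<Rightarrow> bool" where
  "shut_optimal n \<alpha> lam mu h \<nu> j \<longleftrightarrow> (\<exists>u. optimal n \<alpha> lam mu h \<nu> u \<and> u j = 1)"

end

theory Submission
  imports Defs
begin

lemma minprin:
  fixes f p q :: "nat \<Rightarrow> real"
  assumes a: "\<alpha> > 0" and p: "\<forall>i\<le>n. p i \<ge> 0" and q: "\<forall>i\<le>n. q i \<ge> 0"
    and fn: "f (Suc n) \<ge> 0"
    and eq: "\<forall>i\<le>n. \<alpha> * f i \<ge> p i * (f (Suc i) - f i) + q i * (f (i - 1) - f i)"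
  shows "\<forall>i\<le>n. f i \<ge> 0"
proof -
  define M where "M = Min (f ` {..n})"
  have "M \<in> f ` {..n}" unfolding M_def by (rule Min_in) auto
  then obtain k where k: "k \<le> n" "f k = M" by auto
  have kmin: "\<forall>i\<le>n. f k \<le> f i" using k unfolding M_def by (auto intro: Min_le)
  have "f k \<ge> 0"
  proof (rule ccontr)
    assume neg: "\<not> f k \<ge> 0"
    have s1: "f (Suc k) \<ge> f k"
    proof (cases "k < n")
      case True then show ?thesis using kmin by auto
    next
      case False then have "k = n" using k by auto
      then show ?thesis using fn neg by auto
    qed
    have s2: "f (k - 1) \<ge> f k" using kmin k by auto
    have "p k * (f (Suc k) - f k) \<ge> 0" using p k s1 by auto
    moreover have "q k * (f (k - 1) - f k) \<ge> 0" using q k s2 by auto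
    ultimately have "\<alpha> * f k \<ge> 0" using eq k by fastforce
    then show False using neg a by (simp add: zero_le_mult_iff)
  qed
  then show ?thesis using kmin by force
qed

primrec cc :: "real \<Rightarrow> (nat\<Rightarrow>real) \<Rightarrow> (nat\<Rightarrow>real) \<Rightarrow> nat \<Rightarrow> real" where
  "cc a p q 0 = p 0 / (a + p 0)"
| "cc a p q (Suc i) = p (Suc i) / (a + p (Suc i) + q (Suc i) * (1 - cc a p q i))"

primrec aa :: "real \<Rightarrow> (nat\<Rightarrow>real) \<Rightarrow> (nat\<Rightarrow>real) \<Rightarrow> (nat\<Rightarrow>real) \<Rightarrow> nat \<Rightarrow> real" where
  "aa a p q r 0 = r 0 / (a + p 0)"
| "aa a p q r (Suc i) = (r (Suc i) + q (Suc i) * aa a p q r i) / (a + p (Suc i) + q (Suc i) * (1 - cc a p q i))"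

primrec bk :: "real \<Rightarrow> (nat\<Rightarrow>real) \<Rightarrow> (nat\<Rightarrow>real) \<Rightarrow> (nat\<Rightarrow>real) \<Rightarrow> nat \<Rightarrow> nat \<Rightarrow> real" where
  "bk a p q r n 0 = aa a p q r n"
| "bk a p q r n (Suc k) = aa a p q r (n - Suc k) + cc a p q (n - Suc k) * bk a p q r n k"

lemma cc_bounds:
  assumes a: "a > 0" and p: "\<forall>i\<le>n. p i \<ge> 0" and q: "\<forall>i\<le>n. q i \<ge> 0"
  shows "i \<le> n \<Longrightarrow> 0 \<le> cc a p q i \<and> cc a p q i \<le> 1"
proof (induction i)
  case 0
  then show ?case using a p by auto
next
  case (Suc i)
  then have c: "0 \<le> cc a p q i" "cc a p q i \<le> 1" by auto
  have "q (Suc i) * (1 - cc a p q i) \<ge> 0" using q Suc.prems c by auto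
  moreover have "p (Suc i) \<ge> 0" using p Suc.prems by auto
  ultimately show ?case using a by (auto simp: divide_simps)
qed

lemma tri_exists:
  fixes p q r :: "nat \<Rightarrow> real"
  assumes a: "a > 0" and p: "\<forall>i\<le>n. p i \<ge> 0" and q: "\<forall>i\<le>n. q i \<ge> 0"
  shows "\<exists>f. (\<forall>i\<le>n. a * f i = r i + p i * (f (Suc i) - f i) + q i * (f (i - 1) - f i)) \<and> (\<forall>i>n. f i = 0)"
proof -
  define f where "f i = (if i \<le> n then bk a p q r n (n - i) else 0)" for i
  have key: "f i = aa a p q r i + cc a p q i * f (Suc i)" if "i \<le> n" for i
  proof (cases "i < n")
    case True
    then have e: "n - i = Suc (n - Suc i)" by auto
    have e2: "n - Suc (n - Suc i) = i" using True by auto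
    show ?thesis using True unfolding f_def e by (simp add: e2)
  next
    case False
    then show ?thesis using that unfolding f_def by auto
  qed
  have pos: "a + p (Suc i) + q (Suc i) * (1 - cc a p q i) > 0" if "Suc i \<le> n" for i
  proof -
    have "0 \<le> cc a p q i \<and> cc a p q i \<le> 1" using cc_bounds[OF a p q] that by auto
    then have "q (Suc i) * (1 - cc a p q i) \<ge> 0" using q that by auto
    then show ?thesis using a p that by auto
  qed
  have "a * f i = r i + p i * (f (Suc i) - f i) + q i * (f (i - 1) - f i)" if "i \<le> n" for i
  proof (cases i)
    case 0
    have pp: "a + p 0 > 0" using a p by auto
    have h: "f 0 = (r 0 + p 0 * f 1) / (a + p 0)" using key[of 0] by (simp add: add_divide_distrib)
    have "f 0 * (a + p 0) = r 0 + p 0 * f 1" using pp by (simp add: h)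
    then show ?thesis using 0 by (simp add: algebra_simps)
  next
    case (Suc j)
    let ?P = "a + p (Suc j) + q (Suc j) * (1 - cc a p q j)"
    have P: "?P > 0" using pos that Suc by auto
    have e1: "f (Suc j) = (r (Suc j) + q (Suc j) * aa a p q r j + p (Suc j) * f (Suc (Suc j))) / ?P"
      using key[of "Suc j"] that Suc by (simp add: add_divide_distrib)
    have e2: "f (Suc j) * ?P = r (Suc j) + q (Suc j) * aa a p q r j + p (Suc j) * f (Suc (Suc j))"
      using P by (subst e1) simp
    have e3: "f j = aa a p q r j + cc a p q j * f (Suc j)" using key[of j] that Suc by simp
    show ?thesis unfolding Suc using e2 e3 by (simp add: algebra_simps)
  qed
  moreover have "\<forall>i>n. f i = 0" unfolding f_def by auto
  ultimately show ?thesis by blast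
qed


locale adm =
  fixes n :: nat and \<alpha> :: real and lam mu h :: "nat \<Rightarrow> real"
  assumes n: "n \<ge> 1" and alpha: "\<alpha> > 0"
    and lam_pos: "\<forall>i\<le>n. lam i > 0"
    and mu_pos: "\<forall>i. 1 \<le> i \<and> i \<le> n \<longrightarrow> mu i > 0"
    and mu0: "mu 0 = 0"
    and d_cond: "\<forall>i. 1 \<le> i \<and> i \<le> n - 1 \<longrightarrow>
                   0 \<le> dlt (dd lam mu) (i + 1) \<and> dlt (dd lam mu) (i + 1) \<le> dlt (dd lam mu) i"
    and d1: "dlt (dd lam mu) 1 > 0"
    and h_cond: "\<forall>i. 1 \<le> i \<and> i \<le> n - 1 \<longrightarrow>
                   dlt h (i + 1) \<ge> dlt h i \<and> dlt h i \<ge> 0"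
begin

definition EQ :: "(nat \<Rightarrow> real) \<Rightarrow> (nat \<Rightarrow> real) \<Rightarrow> (nat \<Rightarrow> real) \<Rightarrow> bool" where
  "EQ r u f \<longleftrightarrow> (\<forall>i\<le>n. \<alpha> * f i = r i + lam i * (1 - shutp n u i) * (f (Suc i) - f i)
                        + mu i * (f (i - 1) - f i)) \<and> (\<forall>i>n. f i = 0)"

lemma mu_nn: "i \<le> n \<Longrightarrow> mu i \<ge> 0"
  using mu_pos mu0 by (cases i) auto

lemma shutp_le: "policy n u \<Longrightarrow> shutp n u i \<le> 1"
  unfolding policy_def shutp_def by auto

lemma shutp_ge: "policy n u \<Longrightarrow> shutp n u i \<ge> 0"
  unfolding policy_def shutp_def by auto

lemma p_nn: "policy n u \<Longrightarrow> i \<le> n \<Longrightarrow> lam i * (1 - shutp n u i) \<ge> 0"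
  using lam_pos shutp_le[of u i] by (auto intro!: mult_nonneg_nonneg)

lemma EQ_unique:
  assumes u: "policy n u" and f: "EQ r u f" and g: "EQ r u g"
  shows "f = g"
proof -
  have P: "\<forall>i\<le>n. lam i * (1 - shutp n u i) \<ge> 0" using p_nn[OF u] by auto
  have Q: "\<forall>i\<le>n. mu i \<ge> 0" using mu_nn by auto
  have 1: "\<forall>i\<le>n. (\<lambda>i. f i - g i) i \<ge> 0"
  proof (rule minprin[OF alpha P Q])
    show "0 \<le> f (Suc n) - g (Suc n)" using f g unfolding EQ_def by auto
    show "\<forall>i\<le>n. lam i * (1 - shutp n u i) * ((f (Suc i) - g (Suc i)) - (f i - g i)) + mu i * ((f (i - 1) - g (i - 1)) - (f i - g i)) \<le> \<alpha> * (f i - g i)"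
    proof (intro allI impI)
      fix i assume i: "i \<le> n"
      have "\<alpha> * f i = r i + lam i * (1 - shutp n u i) * (f (Suc i) - f i) + mu i * (f (i - 1) - f i)"
        "\<alpha> * g i = r i + lam i * (1 - shutp n u i) * (g (Suc i) - g i) + mu i * (g (i - 1) - g i)"
        using f g i unfolding EQ_def by blast+
      then show "lam i * (1 - shutp n u i) * ((f (Suc i) - g (Suc i)) - (f i - g i)) + mu i * ((f (i - 1) - g (i - 1)) - (f i - g i)) \<le> \<alpha> * (f i - g i)"
        by (simp only: algebra_simps mult_1_left mult_1_right; linarith)
    qed
  qed
  have 2: "\<forall>i\<le>n. (\<lambda>i. g i - f i) i \<ge> 0"
  proof (rule minprin[OF alpha P Q])
    show "0 \<le> g (Suc n) - f (Suc n)" using f g unfolding EQ_def by auto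
    show "\<forall>i\<le>n. lam i * (1 - shutp n u i) * ((g (Suc i) - f (Suc i)) - (g i - f i)) + mu i * ((g (i - 1) - f (i - 1)) - (g i - f i)) \<le> \<alpha> * (g i - f i)"
    proof (intro allI impI)
      fix i assume i: "i \<le> n"
      have "\<alpha> * g i = r i + lam i * (1 - shutp n u i) * (g (Suc i) - g i) + mu i * (g (i - 1) - g i)"
        "\<alpha> * f i = r i + lam i * (1 - shutp n u i) * (f (Suc i) - f i) + mu i * (f (i - 1) - f i)"
        using f g i unfolding EQ_def by blast+
      then show "lam i * (1 - shutp n u i) * ((g (Suc i) - f (Suc i)) - (g i - f i)) + mu i * ((g (i - 1) - f (i - 1)) - (g i - f i)) \<le> \<alpha> * (g i - f i)"
        by (simp only: algebra_simps mult_1_left mult_1_right; linarith)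
    qed
  qed
  show ?thesis
  proof
    fix i show "f i = g i"
    proof (cases "i \<le> n")
      case True then show ?thesis using 1 2 by force
    next
      case False then show ?thesis using f g unfolding EQ_def by auto
    qed
  qed
qed

lemma EQ_exists:
  assumes u: "policy n u"
  shows "\<exists>f. EQ r u f"
  unfolding EQ_def
  using tri_exists[OF alpha, where p="\<lambda>i. lam i * (1 - shutp n u i)" and q=mu and r=r and n=n] p_nn[OF u] mu_nn
  by (simp add: mult.assoc)

lemma evalm_EQ:
  assumes u: "policy n u"
  shows "EQ r u (evalm n \<alpha> lam mu r u)"
proof -
  have "\<exists>!f. EQ r u f" using EQ_exists[OF u] EQ_unique[OF u] by blast
  then have "EQ r u (THE f. EQ r u f)" by (rule theI')
  then show ?thesis unfolding evalm_def EQ_def .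
qed

lemma evalm_eqI:
  assumes u: "policy n u" and f: "EQ r u f"
  shows "evalm n \<alpha> lam mu r u = f"
  using EQ_unique[OF u evalm_EQ[OF u] f] .

lemma evalm_eq:
  assumes u: "policy n u" and i: "i \<le> n"
  shows "\<alpha> * evalm n \<alpha> lam mu r u i = r i + lam i * (1 - shutp n u i) * (evalm n \<alpha> lam mu r u (Suc i) - evalm n \<alpha> lam mu r u i)
                        + mu i * (evalm n \<alpha> lam mu r u (i - 1) - evalm n \<alpha> lam mu r u i)"
  using evalm_EQ[OF u, of r] i unfolding EQ_def by auto

lemma evalm_zero:
  assumes u: "policy n u" and i: "i > n"
  shows "evalm n \<alpha> lam mu r u i = 0"
  using evalm_EQ[OF u, of r] i unfolding EQ_def by auto

lemma diff_eq:
  fixes r :: "nat \<Rightarrow> real"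
  assumes u: "policy n u" and i: "i < n"
  defines "F \<equiv> evalm n \<alpha> lam mu r u"
  defines "D \<equiv> \<lambda>i. F (Suc i) - F i"
  defines "s \<equiv> shutp n u"
  shows "(\<alpha> + lam i * (1 - s i) + mu (Suc i)) * D i
         = (r (Suc i) - r i) + lam (Suc i) * (1 - s (Suc i)) * D (Suc i) + mu i * D (i - 1)"
proof -
  have e1: "\<alpha> * F i = r i + lam i * (1 - s i) * (F (Suc i) - F i) + mu i * (F (i - 1) - F i)"
    using evalm_eq[OF u, of i r] i unfolding F_def s_def by auto
  have e2: "\<alpha> * F (Suc i) = r (Suc i) + lam (Suc i) * (1 - s (Suc i)) * (F (Suc (Suc i)) - F (Suc i)) + mu (Suc i) * (F i - F (Suc i))"
    using evalm_eq[OF u, of "Suc i" r] i unfolding F_def s_def by auto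
  have e3: "mu i * (F (i - 1) - F i) = - (mu i * D (i - 1))"
  proof (cases i)
    case 0 then show ?thesis using mu0 by simp
  next
    case (Suc j) then show ?thesis unfolding D_def by (simp add: algebra_simps)
  qed
  show ?thesis using e1 e2 e3 unfolding D_def by (simp only: algebra_simps mult_1_left mult_1_right; linarith)
qed

lemma evalm_diff:
  fixes r r' :: "nat \<Rightarrow> real"
  assumes u: "policy n u" and u': "policy n u'" and j: "j \<le> n"
    and su: "\<forall>i. i \<noteq> j \<longrightarrow> shutp n u i = shutp n u' i"
    and rr: "\<forall>i. i \<noteq> j \<longrightarrow> r i = r' i"
  defines "F \<equiv> evalm n \<alpha> lam mu r u"
  defines "G \<equiv> evalm n \<alpha> lam mu (\<lambda>i. if i = j then 1 else 0) u'"
  defines "c \<equiv> r' j - r j + lam j * (shutp n u j - shutp n u' j) * (F (Suc j) - F j)"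
  shows "evalm n \<alpha> lam mu r' u' i = F i + c * G i"
proof -
  have "EQ r' u' (\<lambda>i. F i + c * G i)"
    unfolding EQ_def
  proof (intro conjI allI impI)
    fix i assume i: "i \<le> n"
    have eF: "\<alpha> * F i = r i + lam i * (1 - shutp n u i) * (F (Suc i) - F i) + mu i * (F (i - 1) - F i)"
      using evalm_eq[OF u i] unfolding F_def .
    have eG: "\<alpha> * G i = (if i = j then 1 else 0) + lam i * (1 - shutp n u' i) * (G (Suc i) - G i) + mu i * (G (i - 1) - G i)"
      using evalm_eq[OF u' i] unfolding G_def .
    show "\<alpha> * (F i + c * G i) = r' i + lam i * (1 - shutp n u' i) * (F (Suc i) + c * G (Suc i) - (F i + c * G i)) + mu i * (F (i - 1) + c * G (i - 1) - (F i + c * G i))"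
    proof (cases "i = j")
      case True
      have "\<alpha> * (F i + c * G i) = \<alpha> * F i + c * (\<alpha> * G i)" by (simp add: algebra_simps)
      also have "\<dots> = (r i + lam i * (1 - shutp n u i) * (F (Suc i) - F i) + mu i * (F (i - 1) - F i)) + c * (1 + lam i * (1 - shutp n u' i) * (G (Suc i) - G i) + mu i * (G (i - 1) - G i))"
        using eF eG True by simp
      also have "\<dots> = r' i + lam i * (1 - shutp n u' i) * (F (Suc i) + c * G (Suc i) - (F i + c * G i)) + mu i * (F (i - 1) + c * G (i - 1) - (F i + c * G i))"
        unfolding c_def True by (simp add: algebra_simps)
      finally show ?thesis .
    next
      case False
      then have "shutp n u i = shutp n u' i" "r i = r' i" using su rr by auto
      moreover have eGc: "c * (\<alpha> * G i) = c * (lam i * (1 - shutp n u' i) * (G (Suc i) - G i) + mu i * (G (i - 1) - G i))"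
        using eG False by simp
      ultimately show ?thesis using eF eGc False by (simp only: algebra_simps mult_1_left mult_1_right; linarith)
    qed
  next
    fix i assume "i > n"
    then show "F i + c * G i = 0" using evalm_zero[OF u] evalm_zero[OF u'] unfolding F_def G_def by auto
  qed
  then show ?thesis using evalm_eqI[OF u'] by auto
qed

lemma G_nonneg:
  assumes u: "policy n u" and i: "i \<le> n"
  shows "evalm n \<alpha> lam mu (\<lambda>i. if i = j then 1 else 0) u i \<ge> 0"
proof -
  let ?G = "evalm n \<alpha> lam mu (\<lambda>i. if i = j then 1 else 0) u"
  have P: "\<forall>i\<le>n. lam i * (1 - shutp n u i) \<ge> 0" using p_nn[OF u] by auto
  have Q: "\<forall>i\<le>n. mu i \<ge> 0" using mu_nn by auto
  have "\<forall>i\<le>n. ?G i \<ge> 0"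
  proof (rule minprin[OF alpha P Q])
    show "0 \<le> ?G (Suc n)" using evalm_zero[OF u] by auto
    show "\<forall>i\<le>n. lam i * (1 - shutp n u i) * (?G (Suc i) - ?G i) + mu i * (?G (i - 1) - ?G i) \<le> \<alpha> * ?G i"
    proof (intro allI impI)
      fix i assume "i \<le> n"
      from evalm_eq[OF u this] show "lam i * (1 - shutp n u i) * (?G (Suc i) - ?G i) + mu i * (?G (i - 1) - ?G i) \<le> \<alpha> * ?G i"
        by (auto split: if_splits)
    qed
  qed
  then show ?thesis using i by auto
qed

lemma G_pos:
  assumes u: "policy n u" and j: "j \<le> n"
  shows "evalm n \<alpha> lam mu (\<lambda>i. if i = j then 1 else 0) u j > 0"
proof (rule ccontr)
  let ?G = "evalm n \<alpha> lam mu (\<lambda>i. if i = j then 1 else 0) u"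
  assume "\<not> ?G j > 0"
  then have z: "?G j = 0" using G_nonneg[OF u j, where j=j] by auto
  have a1: "?G (Suc j) \<ge> 0"
    using G_nonneg[OF u, where j=j] evalm_zero[OF u] by (cases "Suc j \<le> n") auto
  have a2: "?G (j - 1) \<ge> 0" using G_nonneg[OF u, where j=j] j by auto
  have "lam j * (1 - shutp n u j) * (?G (Suc j) - ?G j) \<ge> 0" using p_nn[OF u j] a1 z by auto
  moreover have "mu j * (?G (j - 1) - ?G j) \<ge> 0" using mu_nn[OF j] a2 z by auto
  ultimately have "\<alpha> * ?G j \<ge> 1" using evalm_eq[OF u j, of "\<lambda>i. if i = j then 1 else 0"] by auto
  then show False using z by simp
qed

end


context adm begin

definition pol :: "nat \<Rightarrow> nat \<Rightarrow> real" where "pol m = setpol (thr n (Suc m))"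
definition v :: "nat \<Rightarrow> nat \<Rightarrow> real" where "v m = vm n \<alpha> lam mu h (pol m)"
definition b :: "nat \<Rightarrow> nat \<Rightarrow> real" where "b m = bm n \<alpha> lam mu (pol m)"
definition X :: "nat \<Rightarrow> nat \<Rightarrow> real" where "X m i = v m (Suc i) - v m i"
definition B :: "nat \<Rightarrow> nat \<Rightarrow> real" where "B m i = 1 - (b m (Suc i) - b m i)"
definition E :: "nat \<Rightarrow> real \<Rightarrow> nat \<Rightarrow> real" where "E m \<nu> i = X m i - \<nu> * B m i"
definition Kd :: "nat \<Rightarrow> real" where "Kd i = \<alpha> + dlt (dd lam mu) (Suc i)"
definition g :: "nat \<Rightarrow> real \<Rightarrow> real" where "g i \<nu> = dlt h (Suc i) - \<nu> * Kd i"
definition nu :: "nat \<Rightarrow> real" where "nu j = nuidx n \<alpha> lam mu h j"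
definition Gm :: "nat \<Rightarrow> nat \<Rightarrow> real" where
  "Gm m = evalm n \<alpha> lam mu (\<lambda>i. if i = m then 1 else 0) (pol (Suc m))"
definition KK :: "nat \<Rightarrow> real" where "KK j = Kd j + mu j * B j (j - 1)"

lemma setpol_policy: "policy n (setpol S)"
  unfolding policy_def setpol_def by auto

lemma pol_policy: "policy n (pol m)"
  unfolding pol_def by (rule setpol_policy)

lemma shutp_pol: "m \<le> n \<Longrightarrow> shutp n (pol m) i = (if m \<le> i then 1 else 0)"
  unfolding shutp_def pol_def setpol_def thr_def by auto

lemma E_lin: "E m \<nu> i = E m \<nu>' i - (\<nu> - \<nu>') * B m i"
  unfolding E_def by (simp add: algebra_simps)

lemma Kd_pos: "i < n \<Longrightarrow> Kd i > 0"
proof -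
  assume i: "i < n"
  show ?thesis
  proof (cases i)
    case 0 then show ?thesis using d1 alpha unfolding Kd_def by simp
  next
    case (Suc k)
    then have "0 \<le> dlt (dd lam mu) (i + 1)" using d_cond i by auto
    then show ?thesis using alpha unfolding Kd_def by simp
  qed
qed

lemma Kd_alt: "Kd i = \<alpha> + (mu (Suc i) - lam (Suc i)) - (mu i - lam i)"
  unfolding Kd_def dlt_def dd_def by simp

lemma X_eq:
  assumes m: "m \<le> n" and i: "i < n"
  shows "(\<alpha> + lam i * (1 - shutp n (pol m) i) + mu (Suc i)) * X m i
       = dlt h (Suc i) + lam (Suc i) * (1 - shutp n (pol m) (Suc i)) * X m (Suc i) + mu i * X m (i - 1)"
  using diff_eq[OF pol_policy i, of m h] unfolding X_def v_def vm_def dlt_def by simp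

lemma B_eq:
  assumes m: "m \<le> n" and i: "i < n"
  shows "(\<alpha> + lam i * (1 - shutp n (pol m) i) + mu (Suc i)) * B m i
       = Kd i + lam (Suc i) * (1 - shutp n (pol m) (Suc i)) * B m (Suc i) + mu i * B m (i - 1)"
proof -
  let ?s = "shutp n (pol m)"
  have e: "(\<alpha> + lam i * (1 - ?s i) + mu (Suc i)) * (b m (Suc i) - b m i)
         = (lam (Suc i) * ?s (Suc i) - lam i * ?s i) + lam (Suc i) * (1 - ?s (Suc i)) * (b m (Suc (Suc i)) - b m (Suc i))
           + mu i * (b m (Suc (i - 1)) - b m (i - 1))"
    using diff_eq[OF pol_policy i, of m "\<lambda>i. lam i * shutp n (pol m) i"] unfolding b_def bm_def by simp
  show ?thesis unfolding B_def Kd_alt using e by (simp add: algebra_simps)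
qed

lemma E_shut:
  assumes m: "m \<le> i" and i: "i < n"
  shows "(\<alpha> + mu (Suc i)) * E m \<nu> i = g i \<nu> + mu i * E m \<nu> (i - 1)"
proof -
  have mn: "m \<le> n" using m i by auto
  have s: "shutp n (pol m) i = 1" "shutp n (pol m) (Suc i) = 1" using shutp_pol[OF mn] m by auto
  have x: "(\<alpha> + mu (Suc i)) * X m i = dlt h (Suc i) + mu i * X m (i - 1)"
    using X_eq[OF mn i] s by simp
  have bb: "(\<alpha> + mu (Suc i)) * B m i = Kd i + mu i * B m (i - 1)"
    using B_eq[OF mn i] s by simp
  have "(\<alpha> + mu (Suc i)) * E m \<nu> i = (\<alpha> + mu (Suc i)) * X m i - \<nu> * ((\<alpha> + mu (Suc i)) * B m i)"
    unfolding E_def by (simp add: algebra_simps)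
  also have "\<dots> = g i \<nu> + mu i * E m \<nu> (i - 1)"
    unfolding x bb g_def E_def by (simp add: algebra_simps)
  finally show ?thesis .
qed

lemma B_open_pos:
  assumes m: "m \<le> n" and m1: "1 \<le> m"
  shows "\<forall>i<m. B m i > 0"
proof -
  define M where "M = Min (B m ` {..<m})"
  have "M \<in> B m ` {..<m}" unfolding M_def by (rule Min_in) (use m1 in \<open>auto simp: lessThan_empty_iff\<close>)
  then obtain k where k: "k < m" "B m k = M" by auto
  have kmin: "\<forall>i<m. B m k \<le> B m i" using k unfolding M_def by (auto intro: Min_le)
  have kn: "k < n" using k m by auto
  have "B m k > 0"
  proof (rule ccontr)
    assume neg: "\<not> B m k > 0"
    have sk: "shutp n (pol m) k = 0" using shutp_pol[OF m] k by auto
    have e: "(\<alpha> + lam k + mu (Suc k)) * B m k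
       = Kd k + lam (Suc k) * (1 - shutp n (pol m) (Suc k)) * B m (Suc k) + mu i * B m (k - 1)" if "i = k" for i
      using B_eq[OF m kn] sk that by simp
    have e: "(\<alpha> + lam k + mu (Suc k)) * B m k
       = Kd k + lam (Suc k) * (1 - shutp n (pol m) (Suc k)) * B m (Suc k) + mu k * B m (k - 1)"
      using e by simp
    have mk: "mu k * B m (k - 1) \<ge> mu k * B m k"
    proof (cases k)
      case 0 then show ?thesis using mu0 by simp
    next
      case (Suc kk)
      then have "B m (k - 1) \<ge> B m k" using kmin k by auto
      moreover have "mu k \<ge> 0" using mu_nn kn by auto
      ultimately show ?thesis by (simp add: mult_left_mono)
    qed
    have Kp: "Kd k > 0" using Kd_pos kn by auto
    show False
    proof (cases "Suc k < m")
      case True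
      then have s1: "shutp n (pol m) (Suc k) = 0" using shutp_pol[OF m] by auto
      have "B m (Suc k) \<ge> B m k" using kmin True by auto
      moreover have "lam (Suc k) > 0" using lam_pos True m by auto
      ultimately have "lam (Suc k) * B m (Suc k) \<ge> lam (Suc k) * B m k" by (simp add: mult_left_mono)
      then have "(\<alpha> + lam k + mu (Suc k)) * B m k \<ge> Kd k + lam (Suc k) * B m k + mu k * B m k"
        using e s1 mk by simp
      then have "Kd k * B m k \<ge> Kd k" unfolding Kd_alt by (simp add: algebra_simps)
      then have "Kd k * B m k \<ge> Kd k * 1" by simp
      then have "B m k \<ge> 1" using Kp by (simp add: mult_le_cancel_left)
      then show False using neg by simp
    next
      case False
      then have s1: "shutp n (pol m) (Suc k) = 1" using shutp_pol[OF m] k by auto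
      have "(\<alpha> + lam k + mu (Suc k)) * B m k \<ge> Kd k + mu k * B m k"
        using e s1 mk by simp
      then have "(Kd k + lam (Suc k)) * B m k \<ge> Kd k" unfolding Kd_alt by (simp add: algebra_simps)
      moreover have "lam (Suc k) > 0" using lam_pos kn by auto
      moreover have "(Kd k + lam (Suc k)) * B m k \<le> 0"
        using neg Kp \<open>lam (Suc k) > 0\<close> by (simp add: mult_nonneg_nonpos)
      ultimately show False using Kp by simp
    qed
  qed
  then show ?thesis using kmin by force
qed

lemma B_pos:
  assumes m: "m \<le> n" and i: "i < n"
  shows "B m i > 0"
  using i
proof (induction i rule: less_induct)
  case (less i)
  show ?case
  proof (cases "i < m")
    case True
    then show ?thesis using B_open_pos[OF m] by auto
  next
    case False
    have s: "shutp n (pol m) i = 1" "shutp n (pol m) (Suc i) = 1" using shutp_pol[OF m] False by auto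
    have bb: "(\<alpha> + mu (Suc i)) * B m i = Kd i + mu i * B m (i - 1)"
      using B_eq[OF m less.prems] s by simp
    have "mu i * B m (i - 1) \<ge> 0"
    proof (cases i)
      case 0 then show ?thesis using mu0 by simp
    next
      case (Suc k)
      then have "B m (i - 1) > 0" using less.IH[of k] less.prems by auto
      moreover have "mu i \<ge> 0" using mu_nn less.prems by auto
      ultimately show ?thesis by simp
    qed
    moreover have "Kd i > 0" using Kd_pos less.prems by auto
    ultimately have "(\<alpha> + mu (Suc i)) * B m i > 0" using bb by linarith
    moreover have "\<alpha> + mu (Suc i) > 0" using alpha mu_nn[of "Suc i"] less.prems by auto
    ultimately show ?thesis by (simp add: zero_less_mult_iff)
  qed
qed

end


context adm begin

lemma swap_vb:
  assumes m: "m < n"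
  shows "v (Suc m) i = v m i + lam m * X m m * Gm m i"
    and "b (Suc m) i = b m i - lam m * B m m * Gm m i"
proof -
  have m': "m \<le> n" "Suc m \<le> n" using m by auto
  have su: "\<forall>i. i \<noteq> m \<longrightarrow> shutp n (pol m) i = shutp n (pol (Suc m)) i"
    using shutp_pol[OF m'(1)] shutp_pol[OF m'(2)] by auto
  have s1: "shutp n (pol m) m = 1" "shutp n (pol (Suc m)) m = 0"
    using shutp_pol[OF m'(1)] shutp_pol[OF m'(2)] by auto
  show "v (Suc m) i = v m i + lam m * X m m * Gm m i"
    using evalm_diff[OF pol_policy pol_policy m'(1) su, of h h i] s1
    unfolding v_def vm_def X_def Gm_def by simp
  have rr: "\<forall>i. i \<noteq> m \<longrightarrow> lam i * shutp n (pol m) i = lam i * shutp n (pol (Suc m)) i"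
    using su by auto
  show "b (Suc m) i = b m i - lam m * B m m * Gm m i"
    using evalm_diff[OF pol_policy pol_policy m'(1) su rr, of i] s1
    unfolding b_def bm_def B_def Gm_def by (simp add: algebra_simps)
qed

lemma swap_E:
  assumes m: "m < n"
  shows "E (Suc m) \<nu> i = E m \<nu> i + lam m * E m \<nu> m * (Gm m (Suc i) - Gm m i)"
  unfolding E_def X_def B_def swap_vb[OF m] by (simp add: algebra_simps)

lemma Gm_nonneg: "i \<le> n \<Longrightarrow> Gm m i \<ge> 0"
  unfolding Gm_def by (rule G_nonneg[OF pol_policy])

lemma Gm_mono:
  assumes m: "m \<le> i" and i: "i < n"
  shows "Gm m (Suc i) \<le> Gm m i"
proof -
  have mn: "Suc m \<le> n" using m i by auto
  have e: "\<alpha> * Gm m (Suc i) = (if Suc i = m then 1 else 0) + lam (Suc i) * (1 - shutp n (pol (Suc m)) (Suc i)) * (Gm m (Suc (Suc i)) - Gm m (Suc i)) + mu (Suc i) * (Gm m (Suc i - 1) - Gm m (Suc i))"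
    using evalm_eq[OF pol_policy[of "Suc m"], where i="Suc i" and r="\<lambda>i. if i = m then 1 else 0"] i unfolding Gm_def by simp
  have "shutp n (pol (Suc m)) (Suc i) = 1" using shutp_pol[OF mn] m by auto
  then have e2: "\<alpha> * Gm m (Suc i) = mu (Suc i) * (Gm m i - Gm m (Suc i))" using e m by simp
  have "\<alpha> * Gm m (Suc i) \<ge> 0" using Gm_nonneg[of "Suc i"] i alpha by simp
  then have "mu (Suc i) * (Gm m i - Gm m (Suc i)) \<ge> 0" using e2 by simp
  moreover have "mu (Suc i) > 0" using mu_pos i by auto
  ultimately show ?thesis by (simp add: zero_le_mult_iff)
qed

lemma nu_0: "nu 0 = dlt h 1 / Kd 0"
  unfolding nu_def Kd_def by simp

lemma nu_Suc:
  assumes j: "Suc j < n"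
  shows "nu (Suc j) = nu j + g (Suc j) (nu j) / KK (Suc j)"
proof -
  have lj: "lam j > 0" using lam_pos j by auto
  have w: "wS n \<alpha> lam mu (thr n (j + 2)) j / rho lam mu j = mu (Suc j) * B (Suc j) j"
    unfolding wS_def rho_def B_def b_def pol_def using lj
    by (simp add: numeral_2_eq_2)
  show ?thesis
    unfolding nu_def nuidx.simps w g_def KK_def Kd_def
    by (simp add: numeral_2_eq_2)
qed

lemma KK_pos: "j < n \<Longrightarrow> KK j > 0"
proof -
  assume j: "j < n"
  have "mu j * B j (j - 1) \<ge> 0"
  proof (cases j)
    case 0 then show ?thesis using mu0 by simp
  next
    case (Suc k)
    then have "B j (j - 1) > 0" using B_pos j by auto
    then show ?thesis using mu_nn j by auto
  qed
  then show ?thesis using Kd_pos j unfolding KK_def by (simp add: add_pos_nonneg)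
qed

lemma R:
  "j < n \<Longrightarrow> (\<alpha> + mu (Suc j)) * E j \<nu> j = (nu j - \<nu>) * KK j"
proof (induction j arbitrary: \<nu>)
  case 0
  have "(\<alpha> + mu (Suc 0)) * E 0 \<nu> 0 = g 0 \<nu>" using E_shut[of 0 0 \<nu>] 0 mu0 by simp
  moreover have "Kd 0 > 0" using Kd_pos 0 by auto
  then have "(dlt h 1 / Kd 0 - \<nu>) * Kd 0 = dlt h 1 - \<nu> * Kd 0" by (simp add: field_simps)
  ultimately show ?case unfolding g_def nu_0 KK_def using mu0 by simp
next
  case (Suc j)
  have jn: "j < n" using Suc by auto
  have apos: "\<alpha> + mu (Suc j) > 0" using alpha mu_nn[of "Suc j"] Suc by auto
  have "(\<alpha> + mu (Suc j)) * E j (nu j) j = 0" using Suc.IH[OF jn, of "nu j"] by simp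
  then have z: "E j (nu j) j = 0" using apos by simp
  have "E (Suc j) (nu j) j = 0" using swap_E[OF jn, of "nu j" j] z by simp
  then have ej: "E (Suc j) \<nu> j = - (\<nu> - nu j) * B (Suc j) j" using E_lin[of "Suc j" \<nu> j "nu j"] by (simp add: algebra_simps)
  have "(\<alpha> + mu (Suc (Suc j))) * E (Suc j) \<nu> (Suc j) = g (Suc j) \<nu> + mu (Suc j) * E (Suc j) \<nu> j"
    using E_shut[of "Suc j" "Suc j" \<nu>] Suc.prems by simp
  also have "\<dots> = g (Suc j) (nu j) - (\<nu> - nu j) * KK (Suc j)"
    unfolding ej g_def KK_def by (simp add: algebra_simps)
  also have "g (Suc j) (nu j) = (nu (Suc j) - nu j) * KK (Suc j)"
    using nu_Suc[OF Suc.prems] KK_pos[OF Suc.prems] by simp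
  finally show ?case by (simp add: algebra_simps)
qed

lemma E_at_nu: "j < n \<Longrightarrow> E j (nu j) j = 0"
proof -
  assume j: "j < n"
  have apos: "\<alpha> + mu (Suc j) > 0" using alpha mu_nn[of "Suc j"] j by auto
  show ?thesis using R[OF j, of "nu j"] apos by simp
qed

lemma E_swap_nu: "j < n \<Longrightarrow> E (Suc j) (nu j) i = E j (nu j) i"
  using swap_E[of j "nu j" i] E_at_nu by simp

lemma g_step:
  assumes j: "Suc j < n" and gj: "g j \<nu> \<ge> 0"
  shows "g (Suc j) \<nu> \<ge> 0"
proof -
  have hc: "dlt h (Suc (Suc j)) \<ge> dlt h (Suc j)" "dlt h (Suc j) \<ge> 0"
    using h_cond[rule_format, of "Suc j"] j by auto
  have dc: "Kd (Suc j) \<le> Kd j"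
    using d_cond[rule_format, of "Suc j"] j unfolding Kd_def by auto
  have kp: "Kd (Suc j) > 0" using Kd_pos j by auto
  show ?thesis
  proof (cases "\<nu> \<le> 0")
    case True
    then have "\<nu> * Kd (Suc j) \<le> 0" using kp by (simp add: mult_nonpos_nonneg)
    then show ?thesis using hc unfolding g_def by linarith
  next
    case False
    then have "\<nu> * Kd (Suc j) \<le> \<nu> * Kd j" using dc by (simp add: mult_left_mono)
    then show ?thesis using hc gj unfolding g_def by linarith
  qed
qed

lemma g_idx:
  assumes "j \<le> i" "i < n" "g j \<nu> \<ge> 0"
  shows "g i \<nu> \<ge> 0"
  using assms
proof (induction i)
  case 0 then show ?case by simp
next
  case (Suc i)
  show ?case
  proof (cases "j = Suc i")
    case True then show ?thesis using Suc by simp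
  next
    case False
    then have "g i \<nu> \<ge> 0" using Suc by auto
    then show ?thesis using g_step Suc.prems by auto
  qed
qed

lemma g_anti:
  assumes "i < n" "\<nu> \<le> \<nu>'" shows "g i \<nu>' \<le> g i \<nu>"
  using Kd_pos[OF assms(1)] assms(2) unfolding g_def by (simp add: mult_right_mono)

lemma nu_step:
  "j < n \<Longrightarrow> g j (nu j) \<ge> 0 \<and> (\<forall>k. j = Suc k \<longrightarrow> nu k \<le> nu j)"
proof (induction j)
  case 0
  have "Kd 0 > 0" using Kd_pos 0 by auto
  then show ?case unfolding g_def nu_0 by simp
next
  case (Suc j)
  have jn: "j < n" using Suc by auto
  have "g (Suc j) (nu j) \<ge> 0" using g_step[OF Suc.prems] Suc.IH[OF jn] by auto
  then have le: "nu j \<le> nu (Suc j)" using nu_Suc[OF Suc.prems] KK_pos[OF Suc.prems] by simp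
  have apos: "\<alpha> + mu (Suc (Suc j)) > 0" using alpha mu_nn[of "Suc (Suc j)"] Suc by auto
  have "E (Suc j) (nu j) j = 0" using E_swap_nu[OF jn] E_at_nu[OF jn] by simp
  then have ej: "E (Suc j) (nu (Suc j)) j = - (nu (Suc j) - nu j) * B (Suc j) j"
    using E_lin[of "Suc j" "nu (Suc j)" j "nu j"] by (simp add: algebra_simps)
  have "B (Suc j) j > 0" using B_pos Suc.prems by auto
  then have "E (Suc j) (nu (Suc j)) j \<le> 0" using ej le by (simp add: mult_nonpos_nonneg)
  moreover have "(\<alpha> + mu (Suc (Suc j))) * E (Suc j) (nu (Suc j)) (Suc j) = g (Suc j) (nu (Suc j)) + mu (Suc j) * E (Suc j) (nu (Suc j)) j"
    using E_shut[of "Suc j" "Suc j"] Suc.prems by simp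
  moreover have "E (Suc j) (nu (Suc j)) (Suc j) = 0" using E_at_nu Suc.prems by simp
  moreover have "mu (Suc j) \<ge> 0" using mu_nn Suc.prems by simp
  ultimately have "g (Suc j) (nu (Suc j)) \<ge> 0"
    by (simp add: mult_nonneg_nonpos) (smt (verit) mult_nonneg_nonpos)
  then show ?case using le by simp
qed

lemma nu_mono: "i \<le> j \<Longrightarrow> j < n \<Longrightarrow> nu i \<le> nu j"
proof (induction j)
  case 0 then show ?case by simp
next
  case (Suc j)
  show ?case
  proof (cases "i = Suc j")
    case True then show ?thesis by simp
  next
    case False
    then have "nu i \<le> nu j" using Suc by auto
    moreover have "nu j \<le> nu (Suc j)" using nu_step[OF Suc.prems(2)] by simp
    ultimately show ?thesis by simp
  qed
qed

end


context adm begin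

lemma Q: "Suc m \<le> n \<Longrightarrow> \<forall>i<Suc m. E (Suc m) (nu m) i \<le> 0"
proof (induction m)
  case 0
  have "E 1 (nu 0) 0 = 0" using E_swap_nu[of 0 0] E_at_nu[of 0] 0 by simp
  then show ?case by simp
next
  case (Suc m)
  have mn: "Suc m < n" using Suc by auto
  show ?case
  proof (intro allI impI)
    fix i assume i: "i < Suc (Suc m)"
    have e: "E (Suc (Suc m)) (nu (Suc m)) i = E (Suc m) (nu (Suc m)) i" using E_swap_nu[OF mn] by simp
    show "E (Suc (Suc m)) (nu (Suc m)) i \<le> 0"
    proof (cases "i = Suc m")
      case True then show ?thesis using e E_at_nu[OF mn] by simp
    next
      case False
      then have il: "i < Suc m" using i by simp
      have "E (Suc m) (nu m) i \<le> 0" using Suc.IH Suc.prems il by auto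
      moreover have "nu m \<le> nu (Suc m)" using nu_mono mn by auto
      moreover have "B (Suc m) i > 0" using B_pos il mn by auto
      ultimately have "E (Suc m) (nu (Suc m)) i \<le> 0"
        using E_lin[of "Suc m" "nu (Suc m)" i "nu m"] by (smt (verit) mult_nonneg_nonneg)
      then show ?thesis using e by simp
    qed
  qed
qed

lemma open_neg:
  assumes m: "m \<le> n" "1 \<le> m" and i: "i < m" and nuv: "\<nu> > nu (m - 1)"
  shows "E m \<nu> i < 0"
proof -
  obtain k where k: "m = Suc k" using m by (cases m) auto
  have "E m (nu k) i \<le> 0" using Q[of k] k m i by auto
  moreover have "B m i > 0" using B_pos m i by auto
  moreover have "\<nu> - nu k > 0" using nuv k by simp
  ultimately show ?thesis using E_lin[of m \<nu> i "nu k"]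
    by (smt (verit) mult_pos_pos)
qed

lemma shut_nonneg:
  assumes m: "m < n" and nuv: "\<nu> \<le> nu m" and i: "m \<le> i" "i < n"
  shows "E m \<nu> i \<ge> 0"
  using i
proof (induction i)
  case 0
  then have m0: "m = 0" by simp
  have "(\<alpha> + mu (Suc 0)) * E 0 \<nu> 0 = (nu 0 - \<nu>) * KK 0" using R[of 0 \<nu>] 0 by simp
  moreover have "(nu 0 - \<nu>) * KK 0 \<ge> 0" using KK_pos[of 0] 0 nuv m0 by simp
  ultimately have "(\<alpha> + mu (Suc 0)) * E 0 \<nu> 0 \<ge> 0" by simp
  moreover have "\<alpha> + mu (Suc 0) > 0" using alpha mu_nn[of 1] n by auto
  ultimately show ?case using m0 by (simp add: zero_le_mult_iff)
next
  case (Suc i)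
  have apos: "\<alpha> + mu (Suc (Suc i)) > 0" using alpha mu_nn[of "Suc (Suc i)"] Suc.prems by auto
  show ?case
  proof (cases "m = Suc i")
    case True
    have "(\<alpha> + mu (Suc (Suc i))) * E m \<nu> (Suc i) = (nu m - \<nu>) * KK m" using R[of m \<nu>] m True by simp
    moreover have "(nu m - \<nu>) * KK m \<ge> 0" using KK_pos[OF m] nuv by simp
    ultimately have "(\<alpha> + mu (Suc (Suc i))) * E m \<nu> (Suc i) \<ge> 0" by simp
    then show ?thesis using apos by (simp add: zero_le_mult_iff)
  next
    case False
    then have mi: "m \<le> i" using Suc.prems by simp
    have ei: "E m \<nu> i \<ge> 0" using Suc.IH mi Suc.prems by simp
    have "g m (nu m) \<ge> 0" using nu_step[OF m] by simp
    then have "g m \<nu> \<ge> 0" using g_anti[OF m nuv] by simp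
    then have gi: "g (Suc i) \<nu> \<ge> 0" using g_idx[of m "Suc i"] Suc.prems by simp
    have "(\<alpha> + mu (Suc (Suc i))) * E m \<nu> (Suc i) = g (Suc i) \<nu> + mu (Suc i) * E m \<nu> i"
      using E_shut[of m "Suc i" \<nu>] Suc.prems by simp
    moreover have "mu (Suc i) * E m \<nu> i \<ge> 0" using ei mu_nn[of "Suc i"] Suc.prems by simp
    ultimately have "(\<alpha> + mu (Suc (Suc i))) * E m \<nu> (Suc i) \<ge> 0" using gi by simp
    then show ?thesis using apos by (simp add: zero_le_mult_iff)
  qed
qed

lemma chain_step:
  assumes mj: "m < j" and j: "j < n"
  shows "E m (nu j) j \<le> E (Suc m) (nu j) j"
proof -
  have mn: "m < n" using mj j by simp
  have "(\<alpha> + mu (Suc m)) * E m (nu j) m = (nu m - nu j) * KK m" using R[OF mn] by simp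
  moreover have "nu m \<le> nu j" using nu_mono mj j by simp
  moreover have "KK m > 0" using KK_pos mn by simp
  moreover have "\<alpha> + mu (Suc m) > 0" using alpha mu_nn[of "Suc m"] mn by auto
  ultimately have em: "E m (nu j) m \<le> 0"
    by (smt (verit) mult_nonpos_nonneg zero_less_mult_iff)
  have gm: "Gm m (Suc j) - Gm m j \<le> 0" using Gm_mono[of m j] mj j by simp
  have "lam m > 0" using lam_pos mn by simp
  then have "lam m * E m (nu j) m \<le> 0" using em by (simp add: mult_nonneg_nonpos)
  then have "lam m * E m (nu j) m * (Gm m (Suc j) - Gm m j) \<ge> 0" using gm by (simp add: mult_nonpos_nonpos)
  then show ?thesis using swap_E[OF mn, of "nu j" j] by simp
qed

lemma chain: "m \<le> j \<Longrightarrow> j < n \<Longrightarrow> E m (nu j) j \<le> 0"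
proof (induction "j - m" arbitrary: m)
  case 0
  then have "m = j" by simp
  then show ?case using E_at_nu 0 by simp
next
  case (Suc d)
  then have "m < j" by simp
  moreover have "E (Suc m) (nu j) j \<le> 0" using Suc by simp
  ultimately show ?case using chain_step Suc.prems by (meson order_trans)
qed

lemma ratio:
  assumes mj: "m \<le> j" and j: "j < n"
  defines "S \<equiv> thr n (Suc m)"
  shows "(vm n \<alpha> lam mu h (setpol (S - {j})) j - vm n \<alpha> lam mu h (setpol S) j)
       / (bm n \<alpha> lam mu (setpol S) j - bm n \<alpha> lam mu (setpol (S - {j})) j) = X m j / B m j"
proof -
  have mn: "m \<le> n" using mj j by simp
  have jn: "j \<le> n" using j by simp
  let ?u = "setpol S" and ?u' = "setpol (S - {j})"
  have uu: "?u = pol m" unfolding S_def pol_def ..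
  have su: "\<forall>i. i \<noteq> j \<longrightarrow> shutp n ?u i = shutp n ?u' i"
    unfolding shutp_def setpol_def by auto
  have s1: "shutp n ?u j = 1" "shutp n ?u' j = 0"
    unfolding shutp_def setpol_def S_def thr_def using mj j by auto
  define G where "G = evalm n \<alpha> lam mu (\<lambda>i. if i = j then 1 else 0) ?u'"
  have Gp: "G j > 0" unfolding G_def by (rule G_pos[OF setpol_policy jn])
  have ev: "vm n \<alpha> lam mu h ?u' j = v m j + lam j * X m j * G j"
    using evalm_diff[OF setpol_policy setpol_policy jn su, of h h j] s1
    unfolding v_def vm_def X_def G_def uu by simp
  have rr: "\<forall>i. i \<noteq> j \<longrightarrow> lam i * shutp n ?u i = lam i * shutp n ?u' i"
    using su by auto
  have eb: "bm n \<alpha> lam mu ?u' j = b m j - lam j * B m j * G j"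
    using evalm_diff[OF setpol_policy setpol_policy jn su rr, of j] s1
    unfolding b_def bm_def B_def G_def uu by (simp add: algebra_simps)
  have lp: "lam j > 0" using lam_pos j by simp
  have "(vm n \<alpha> lam mu h ?u' j - vm n \<alpha> lam mu h ?u j) / (bm n \<alpha> lam mu ?u j - bm n \<alpha> lam mu ?u' j)
      = (lam j * G j * X m j) / (lam j * G j * B m j)"
    unfolding ev eb uu v_def[symmetric] b_def[symmetric] by (simp add: algebra_simps)
  also have "\<dots> = X m j / B m j" using lp Gp by simp
  finally show ?thesis .
qed

lemma optimal_pol:
  assumes m: "m \<le> n"
    and up: "\<forall>i<n. m \<le> i \<longrightarrow> E m \<nu> i \<ge> 0"
    and lo: "\<forall>i<m. E m \<nu> i \<le> 0"
  shows "optimal n \<alpha> lam mu h \<nu> (pol m)"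
  unfolding optimal_def
proof (intro conjI allI impI)
  show "policy n (pol m)" by (rule pol_policy)
  fix u' i assume u': "policy n u'" and i: "i \<le> n"
  define f where "f i = (vm n \<alpha> lam mu h u' i + \<nu> * bm n \<alpha> lam mu u' i) - (v m i + \<nu> * b m i)" for i
  let ?a = "shutp n u'" and ?s = "shutp n (pol m)"
  have P: "\<forall>i\<le>n. lam i * (1 - ?a i) \<ge> 0" using p_nn[OF u'] by auto
  have Qm: "\<forall>i\<le>n. mu i \<ge> 0" using mu_nn by auto
  have "\<forall>i\<le>n. f i \<ge> 0"
  proof (rule minprin[OF alpha P Qm])
    show "f (Suc n) \<ge> 0" unfolding f_def v_def b_def vm_def bm_def
      using evalm_zero[OF u'] evalm_zero[OF pol_policy] by simp
    show "\<forall>i\<le>n. lam i * (1 - ?a i) * (f (Suc i) - f i) + mu i * (f (i - 1) - f i) \<le> \<alpha> * f i"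
    proof (intro allI impI)
      fix i assume i: "i \<le> n"
      let ?v' = "vm n \<alpha> lam mu h u'" and ?b' = "bm n \<alpha> lam mu u'"
      have ev': "\<alpha> * ?v' i = h i + lam i * (1 - ?a i) * (?v' (Suc i) - ?v' i) + mu i * (?v' (i - 1) - ?v' i)"
        using evalm_eq[OF u' i] unfolding vm_def .
      have eb': "\<alpha> * ?b' i = lam i * ?a i + lam i * (1 - ?a i) * (?b' (Suc i) - ?b' i) + mu i * (?b' (i - 1) - ?b' i)"
        using evalm_eq[OF u' i] unfolding bm_def .
      have ev: "\<alpha> * v m i = h i + lam i * (1 - ?s i) * (v m (Suc i) - v m i) + mu i * (v m (i - 1) - v m i)"
        using evalm_eq[OF pol_policy i] unfolding vm_def v_def .
      have eb: "\<alpha> * b m i = lam i * ?s i + lam i * (1 - ?s i) * (b m (Suc i) - b m i) + mu i * (b m (i - 1) - b m i)"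
        using evalm_eq[OF pol_policy i] unfolding bm_def b_def .
      have id: "\<alpha> * f i = lam i * (1 - ?a i) * (f (Suc i) - f i) + mu i * (f (i - 1) - f i)
                + lam i * (?s i - ?a i) * ((v m (Suc i) - v m i) - \<nu> * (1 - (b m (Suc i) - b m i)))"
      proof -
        have "\<alpha> * f i = \<alpha> * ?v' i + \<nu> * (\<alpha> * ?b' i) - \<alpha> * v m i - \<nu> * (\<alpha> * b m i)"
          unfolding f_def by (simp add: algebra_simps)
        also have "\<dots> = (h i + lam i * (1 - ?a i) * (?v' (Suc i) - ?v' i) + mu i * (?v' (i - 1) - ?v' i))
            + \<nu> * (lam i * ?a i + lam i * (1 - ?a i) * (?b' (Suc i) - ?b' i) + mu i * (?b' (i - 1) - ?b' i))
            - (h i + lam i * (1 - ?s i) * (v m (Suc i) - v m i) + mu i * (v m (i - 1) - v m i))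
            - \<nu> * (lam i * ?s i + lam i * (1 - ?s i) * (b m (Suc i) - b m i) + mu i * (b m (i - 1) - b m i))"
          unfolding ev' eb' ev eb ..
        also have "\<dots> = lam i * (1 - ?a i) * (f (Suc i) - f i) + mu i * (f (i - 1) - f i)
                + lam i * (?s i - ?a i) * ((v m (Suc i) - v m i) - \<nu> * (1 - (b m (Suc i) - b m i)))"
          unfolding f_def by (simp add: algebra_simps)
        finally show ?thesis .
      qed
      have "lam i * (?s i - ?a i) * ((v m (Suc i) - v m i) - \<nu> * (1 - (b m (Suc i) - b m i))) \<ge> 0"
      proof (cases "i < n")
        case True
        have Ei: "(v m (Suc i) - v m i) - \<nu> * (1 - (b m (Suc i) - b m i)) = E m \<nu> i"
          unfolding E_def X_def B_def ..
        have a01: "0 \<le> ?a i" "?a i \<le> 1" using shutp_ge[OF u'] shutp_le[OF u'] by auto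
        have lp: "lam i > 0" using lam_pos i by auto
        show ?thesis
        proof (cases "m \<le> i")
          case True
          then have "?s i = 1" using shutp_pol[OF m] by simp
          moreover have "E m \<nu> i \<ge> 0" using up True \<open>i < n\<close> by auto
          ultimately show ?thesis unfolding Ei using a01 lp by simp
        next
          case False
          then have "?s i = 0" using shutp_pol[OF m] by simp
          moreover have "E m \<nu> i \<le> 0" using lo False by auto
          moreover have "lam i * ?a i \<ge> 0" using a01 lp by simp
          ultimately show ?thesis unfolding Ei
            by (simp add: mult_nonneg_nonpos)
        qed
      next
        case False
        then have "?s i = 1" "?a i = 1" unfolding shutp_def by auto
        then show ?thesis by simp
      qed
      then show "lam i * (1 - ?a i) * (f (Suc i) - f i) + mu i * (f (i - 1) - f i) \<le> \<alpha> * f i"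
        using id by linarith
    qed
  qed
  then have "f i \<ge> 0" using i by auto
  then show "vm n \<alpha> lam mu h (pol m) i + \<nu> * bm n \<alpha> lam mu (pol m) i \<le> vm n \<alpha> lam mu h u' i + \<nu> * bm n \<alpha> lam mu u' i"
    unfolding f_def v_def b_def by simp
qed

end


context adm begin

lemma partA: "\<forall>S\<in>thrF n. \<forall>i<n. wS n \<alpha> lam mu S i > 0"
proof (intro ballI allI impI)
  fix S i assume S: "S \<in> thrF n" and i: "i < n"
  obtain k where k: "k \<in> {1..n+1}" "S = thr n k" using S unfolding thrF_def by auto
  define m where "m = k - 1"
  have km: "k = Suc m" "m \<le> n" using k unfolding m_def by auto
  have "wS n \<alpha> lam mu S i = lam i * B m i"
    unfolding wS_def B_def b_def pol_def k(2) km(1) ..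
  moreover have "lam i > 0" using lam_pos i by auto
  moreover have "B m i > 0" using B_pos km i by auto
  ultimately show "wS n \<alpha> lam mu S i > 0" by simp
qed

lemma partM: "\<forall>j. j + 1 < n \<longrightarrow> nuidx n \<alpha> lam mu h j \<le> nuidx n \<alpha> lam mu h (j + 1)"
  using nu_step unfolding nu_def by auto

lemma pol_at: "m \<le> j \<Longrightarrow> j < n \<Longrightarrow> pol m j = 1"
  unfolding pol_def setpol_def thr_def by auto

lemma same_value_contra:
  assumes m: "m \<le> n" and j: "j < m"
    and u: "policy n u" and uj: "u j = 1"
    and eqv: "\<forall>i\<le>n. vm n \<alpha> lam mu h u i + \<nu> * bm n \<alpha> lam mu u i = v m i + \<nu> * b m i"
  shows "E m \<nu> j = 0"
proof -
  have jn: "j < n" "j \<le> n" "Suc j \<le> n" using j m by auto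
  let ?vu = "vm n \<alpha> lam mu h u" and ?bu = "bm n \<alpha> lam mu u"
  have au: "shutp n u j = 1" using uj jn unfolding shutp_def by simp
  have sj: "shutp n (pol m) j = 0" using shutp_pol[OF m] j by simp
  have evu: "\<alpha> * ?vu j = h j + mu j * (?vu (j - 1) - ?vu j)"
    using evalm_eq[OF u jn(2), of h] au unfolding vm_def by simp
  have ebu: "\<alpha> * ?bu j = lam j + mu j * (?bu (j - 1) - ?bu j)"
    using evalm_eq[OF u jn(2), of "\<lambda>i. lam i * shutp n u i"] au unfolding bm_def by simp
  have ev: "\<alpha> * v m j = h j + lam j * (v m (Suc j) - v m j) + mu j * (v m (j - 1) - v m j)"
    using evalm_eq[OF pol_policy jn(2), of h m] sj unfolding vm_def v_def by simp
  have eb: "\<alpha> * b m j = lam j * (b m (Suc j) - b m j) + mu j * (b m (j - 1) - b m j)"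
    using evalm_eq[OF pol_policy jn(2), of "\<lambda>i. lam i * shutp n (pol m) i" m] sj unfolding bm_def b_def by simp
  have e1: "?vu j + \<nu> * ?bu j = v m j + \<nu> * b m j" using eqv jn by auto
  have e2: "?vu (j - 1) + \<nu> * ?bu (j - 1) = v m (j - 1) + \<nu> * b m (j - 1)" using eqv jn by auto
  have "\<alpha> * (?vu j + \<nu> * ?bu j) = \<alpha> * ?vu j + \<nu> * (\<alpha> * ?bu j)" by (simp add: algebra_simps)
  also have "\<dots> = h j + mu j * (?vu (j - 1) - ?vu j) + \<nu> * (lam j + mu j * (?bu (j - 1) - ?bu j))"
    unfolding evu ebu ..
  also have "\<dots> = h j + \<nu> * lam j + mu j * ((?vu (j - 1) + \<nu> * ?bu (j - 1)) - (?vu j + \<nu> * ?bu j))"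
    by (simp add: algebra_simps)
  finally have A: "\<alpha> * (v m j + \<nu> * b m j) = h j + \<nu> * lam j + mu j * ((v m (j - 1) + \<nu> * b m (j - 1)) - (v m j + \<nu> * b m j))"
    unfolding e1 e2 .
  have "\<alpha> * (v m j + \<nu> * b m j) = \<alpha> * v m j + \<nu> * (\<alpha> * b m j)" by (simp add: algebra_simps)
  also have "\<dots> = h j + lam j * (v m (Suc j) - v m j) + mu j * (v m (j - 1) - v m j) + \<nu> * (lam j * (b m (Suc j) - b m j) + mu j * (b m (j - 1) - b m j))"
    unfolding ev eb ..
  also have "\<dots> = h j + lam j * (E m \<nu> j + \<nu>) + mu j * ((v m (j - 1) + \<nu> * b m (j - 1)) - (v m j + \<nu> * b m j))"
    unfolding E_def X_def B_def by (simp add: algebra_simps)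
  finally have C: "\<alpha> * (v m j + \<nu> * b m j) = h j + lam j * (E m \<nu> j + \<nu>) + mu j * ((v m (j - 1) + \<nu> * b m (j - 1)) - (v m j + \<nu> * b m j))" .
  have "lam j * E m \<nu> j = 0" using A C by (simp add: algebra_simps)
  moreover have "lam j > 0" using lam_pos jn by auto
  ultimately show ?thesis by simp
qed

lemma partB: "\<forall>\<nu>::real. {j. j < n \<and> shut_optimal n \<alpha> lam mu h \<nu> j} = {j. j < n \<and> \<nu> \<le> nuidx n \<alpha> lam mu h j}
                   \<and> {j. j < n \<and> \<nu> \<le> nuidx n \<alpha> lam mu h j} \<in> thrF n"
proof
  fix \<nu> :: real
  define m where "m = (if \<exists>j<n. \<nu> \<le> nu j then (LEAST j. j < n \<and> \<nu> \<le> nu j) else n)"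
  have mchar: "m \<le> n \<and> (\<forall>i<n. (\<nu> \<le> nu i \<longleftrightarrow> m \<le> i))"
  proof (cases "\<exists>j<n. \<nu> \<le> nu j")
    case True
    then have mdef: "m = (LEAST j. j < n \<and> \<nu> \<le> nu j)" unfolding m_def by simp
    have Pm: "m < n \<and> \<nu> \<le> nu m" unfolding mdef using True by (metis (mono_tags, lifting) LeastI)
    have "\<forall>i<n. (\<nu> \<le> nu i \<longleftrightarrow> m \<le> i)"
    proof (intro allI impI iffI)
      fix i assume "i < n" "\<nu> \<le> nu i"
      then show "m \<le> i" unfolding mdef by (simp add: Least_le)
    next
      fix i assume "i < n" "m \<le> i"
      then show "\<nu> \<le> nu i" using Pm nu_mono[of m i] by simp
    qed
    then show ?thesis using Pm by simp
  next
    case False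
    then show ?thesis unfolding m_def by auto
  qed
  have mn: "m \<le> n" using mchar by simp
  have setq: "{j. j < n \<and> \<nu> \<le> nuidx n \<alpha> lam mu h j} = thr n (Suc m)"
    using mchar unfolding thr_def nu_def[symmetric] by auto
  have opt: "optimal n \<alpha> lam mu h \<nu> (pol m)"
  proof (rule optimal_pol[OF mn])
    show "\<forall>i<n. m \<le> i \<longrightarrow> E m \<nu> i \<ge> 0"
    proof (intro allI impI)
      fix i assume i: "i < n" "m \<le> i"
      then have "m < n" by simp
      moreover have "\<nu> \<le> nu m" using mchar \<open>m < n\<close> by simp
      ultimately show "E m \<nu> i \<ge> 0" using shut_nonneg i by simp
    qed
    show "\<forall>i<m. E m \<nu> i \<le> 0"
    proof (intro allI impI)
      fix i assume i: "i < m"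
      then have m1: "1 \<le> m" by simp
      have "\<not> \<nu> \<le> nu (m - 1)" using mchar m1 mn by (metis diff_less le_less_trans less_numeral_extra(1) not_le)
      then have "E m \<nu> i < 0" using open_neg[OF mn m1 i] by simp
      then show "E m \<nu> i \<le> 0" by simp
    qed
  qed
  have "{j. j < n \<and> shut_optimal n \<alpha> lam mu h \<nu> j} = {j. j < n \<and> \<nu> \<le> nuidx n \<alpha> lam mu h j}"
  proof (intro set_eqI iffI)
    fix j assume "j \<in> {j. j < n \<and> \<nu> \<le> nuidx n \<alpha> lam mu h j}"
    then have j: "j < n" "m \<le> j" using mchar unfolding nu_def by auto
    have "pol m j = 1" using pol_at j by simp
    then show "j \<in> {j. j < n \<and> shut_optimal n \<alpha> lam mu h \<nu> j}"
      using opt j unfolding shut_optimal_def by auto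
  next
    fix j assume "j \<in> {j. j < n \<and> shut_optimal n \<alpha> lam mu h \<nu> j}"
    then obtain u where j: "j < n" and uo: "optimal n \<alpha> lam mu h \<nu> u" and uj: "u j = 1"
      unfolding shut_optimal_def by auto
    show "j \<in> {j. j < n \<and> \<nu> \<le> nuidx n \<alpha> lam mu h j}"
    proof (rule ccontr)
      assume "j \<notin> {j. j < n \<and> \<nu> \<le> nuidx n \<alpha> lam mu h j}"
      then have jm: "j < m" using mchar j unfolding nu_def by auto
      have up: "policy n u" using uo unfolding optimal_def by simp
      have eqv: "\<forall>i\<le>n. vm n \<alpha> lam mu h u i + \<nu> * bm n \<alpha> lam mu u i = v m i + \<nu> * b m i"
      proof (intro allI impI)
        fix i assume i: "i \<le> n"
        have "vm n \<alpha> lam mu h u i + \<nu> * bm n \<alpha> lam mu u i \<le> v m i + \<nu> * b m i"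
          using uo pol_policy i unfolding optimal_def v_def b_def by blast
        moreover have "v m i + \<nu> * b m i \<le> vm n \<alpha> lam mu h u i + \<nu> * bm n \<alpha> lam mu u i"
          using opt up i unfolding optimal_def v_def b_def by blast
        ultimately show "vm n \<alpha> lam mu h u i + \<nu> * bm n \<alpha> lam mu u i = v m i + \<nu> * b m i" by simp
      qed
      have "E m \<nu> j = 0" using same_value_contra[OF mn jm up uj eqv] .
      moreover have "E m \<nu> j < 0"
      proof -
        have m1: "1 \<le> m" using jm by simp
        have "\<not> \<nu> \<le> nu (m - 1)" using mchar m1 mn by (metis diff_less le_less_trans less_numeral_extra(1) not_le)
        then show ?thesis using open_neg[OF mn m1 jm] by simp
      qed
      ultimately show False by simp
    qed
  qed
  moreover have "{j. j < n \<and> \<nu> \<le> nuidx n \<alpha> lam mu h j} \<in> thrF n"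
    unfolding setq thrF_def using mn by auto
  ultimately show "{j. j < n \<and> shut_optimal n \<alpha> lam mu h \<nu> j} = {j. j < n \<and> \<nu> \<le> nuidx n \<alpha> lam mu h j}
                   \<and> {j. j < n \<and> \<nu> \<le> nuidx n \<alpha> lam mu h j} \<in> thrF n" by simp
qed

end

context adm begin
lemma partC: "\<forall>j<n. nuidx n \<alpha> lam mu h j =
            Max ((\<lambda>S. (vm n \<alpha> lam mu h (setpol (S - {j})) j - vm n \<alpha> lam mu h (setpol S) j)
                     / (bm n \<alpha> lam mu (setpol S) j - bm n \<alpha> lam mu (setpol (S - {j})) j))
                 ` {S. S \<in> thr n ` {1..n} \<and> j \<in> S})"
proof (intro allI impI)
  fix j assume j: "j < n"
  let ?r = "\<lambda>S. (vm n \<alpha> lam mu h (setpol (S - {j})) j - vm n \<alpha> lam mu h (setpol S) j)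
                     / (bm n \<alpha> lam mu (setpol S) j - bm n \<alpha> lam mu (setpol (S - {j})) j)"
  let ?F = "{S. S \<in> thr n ` {1..n} \<and> j \<in> S}"
  have fin: "finite (?r ` ?F)"
  proof -
    have "?F \<subseteq> thr n ` {1..n}" by auto
    then have "finite ?F" by (rule finite_subset) simp
    then show ?thesis by (rule finite_imageI)
  qed
  have "Max (?r ` ?F) = nu j"
  proof (rule Max_eqI[OF fin])
    fix y assume "y \<in> ?r ` ?F"
    then obtain S where S: "S \<in> ?F" "y = ?r S" by (rule imageE) (rule that, simp_all)
    then have S1: "S \<in> thr n ` {1..n}" and S2: "j \<in> S" unfolding mem_Collect_eq by blast+
    from S1 obtain k where k0: "k \<in> {1..n}" "S = thr n k" by (rule imageE) (rule that, simp_all)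
    have k: "k \<in> {1..n}" "j \<in> thr n k" "y = ?r (thr n k)" using k0 S2 S(2) by blast+
    define m where "m = k - 1"
    have km: "k = Suc m" using k unfolding m_def by auto
    have mj: "m \<le> j" using k(2) unfolding thr_def m_def by auto
    have y0: "y = ?r (thr n (Suc m))" using k(3) unfolding km .
    have y: "y = X m j / B m j" unfolding y0 by (rule ratio[OF mj j])
    have Bp: "B m j > 0" using B_pos mj j by auto
    have "E m (nu j) j \<le> 0" using chain mj j by simp
    then have "X m j \<le> nu j * B m j" unfolding E_def by simp
    then show "y \<le> nu j" unfolding y using Bp by (simp add: pos_divide_le_eq)
  next
    have "Suc j \<in> {1..n}" using j by simp
    then have "thr n (Suc j) \<in> thr n ` {1..n}" by (rule imageI)
    moreover have "j \<in> thr n (Suc j)" unfolding thr_def using j by simp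
    ultimately have mem: "thr n (Suc j) \<in> ?F" unfolding mem_Collect_eq by (intro conjI)
    have Bp: "B j j > 0" using B_pos j by auto
    have "X j j = nu j * B j j" using E_at_nu[OF j] unfolding E_def by simp
    have r1: "?r (thr n (Suc j)) = X j j / B j j" by (rule ratio[OF order_refl j])
    have "X j j / B j j = nu j" using Bp \<open>X j j = nu j * B j j\<close> by simp
    then have "nu j = ?r (thr n (Suc j))" using r1 by simp
    then show "nu j \<in> ?r ` ?F" by (rule image_eqI[OF _ mem])
  qed
  then show "nuidx n \<alpha> lam mu h j = Max (?r ` ?F)" unfolding nu_def by (rule sym)
qed

end

theorem theorem12:
  fixes n :: nat and \<alpha> :: real and lam mu h :: "nat \<Rightarrow> real"
  assumes n: "n \<ge> 1" and alpha: "\<alpha> > 0"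
    and lam_pos: "\<forall>i\<le>n. lam i > 0"
    and mu_pos: "\<forall>i. 1 \<le> i \<and> i \<le> n \<longrightarrow> mu i > 0"
    and mu0: "mu 0 = 0"
    and d_cond: "\<forall>i. 1 \<le> i \<and> i \<le> n - 1 \<longrightarrow>
                   0 \<le> dlt (dd lam mu) (i + 1) \<and> dlt (dd lam mu) (i + 1) \<le> dlt (dd lam mu) i"
    and d1: "dlt (dd lam mu) 1 > 0"
    and h_cond: "\<forall>i. 1 \<le> i \<and> i \<le> n - 1 \<longrightarrow>
                   dlt h (i + 1) \<ge> dlt h i \<and> dlt h i \<ge> 0"
  shows "(\<forall>S\<in>thrF n. \<forall>i<n. wS n \<alpha> lam mu S i > 0)
       \<and> (\<forall>j. j + 1 < n \<longrightarrow> nuidx n \<alpha> lam mu h j \<le> nuidx n \<alpha> lam mu h (j + 1))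
       \<and> (\<forall>\<nu>::real. {j. j < n \<and> shut_optimal n \<alpha> lam mu h \<nu> j} = {j. j < n \<and> \<nu> \<le> nuidx n \<alpha> lam mu h j}
                   \<and> {j. j < n \<and> \<nu> \<le> nuidx n \<alpha> lam mu h j} \<in> thrF n)
       \<and> (\<forall>j<n. nuidx n \<alpha> lam mu h j =
            Max ((\<lambda>S. (vm n \<alpha> lam mu h (setpol (S - {j})) j - vm n \<alpha> lam mu h (setpol S) j)
                     / (bm n \<alpha> lam mu (setpol S) j - bm n \<alpha> lam mu (setpol (S - {j})) j))
                 ` {S. S \<in> thr n ` {1..n} \<and> j \<in> S}))"
proof -
  interpret adm n \<alpha> lam mu h
    using n alpha lam_pos mu_pos mu0 d_cond d1 h_cond by unfold_locales
  show ?thesis by (intro conjI partA partM partB partC)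
qed

end
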